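(* Let $q\ge 2$ be an integer and let $\log$ denote the base-$q$ logarithm. For every $\theta\in[0,1]$ let $F(\theta)$ be the maximum of the joint entropy $H(X_1,X_2)$ (computed with base-$q$ logarithms) over all pairs of independent random variables $X_1,X_2$ taking values in $[q]=\{1,\dots,q\}$ such that $\Pr[X_1=X_2]=\theta$. Then the function $F\colon[0,1]\to\mathbb{R}$ is continuous, increasing on $[0,1/q]$ and decreasing on $[1/q,1]$. Moreover, for $\theta\in[1/q,1]$, \[ F(\theta)=2\bigl(-\alpha\log\alpha-(1-\alpha)\log(1-\alpha)+(1-\alpha)\log(q-1)\bigr), \] where $\alpha=\alpha(\theta):=\frac1q+\sqrt{\left(1-\frac1q\right)\left(\theta-\frac1q\right)}$, which defines a bijection $\alpha\colon[1/q,1]\to[1/q,1]$.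
   Context: The entropy of a random variable $Z$ with distribution $(z_1,\dots,z_k)$ is $H(Z)=-\sum z_i\log z_i$ with base-$q$ logarithm (and $0\log 0=0$); $H(X_1,X_2)$ denotes the entropy of the pair $(X_1,X_2)$. *)

theory Defs
  imports "HOL-Analysis.Analysis"
begin

definition distr :: "nat \<Rightarrow> (nat \<Rightarrow> real) \<Rightarrow> bool" where
  "distr q p \<longleftrightarrow> (\<forall>i\<in>{1..q}. 0 \<le> p i) \<and> (\<Sum>i=1..q. p i) = 1"

definition xlogx :: "nat \<Rightarrow> real \<Rightarrow> real" where
  "xlogx q z = (if z = 0 then 0 else z * log (real q) z)"

definition joint_entropy :: "nat \<Rightarrow> (nat \<Rightarrow> real) \<Rightarrow> (nat \<Rightarrow> real) \<Rightarrow> real" where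
  "joint_entropy q p r = - (\<Sum>i=1..q. \<Sum>j=1..q. xlogx q (p i * r j))"

definition coll_prob :: "nat \<Rightarrow> (nat \<Rightarrow> real) \<Rightarrow> (nat \<Rightarrow> real) \<Rightarrow> real" where
  "coll_prob q p r = (\<Sum>i=1..q. p i * r i)"

definition ent_set :: "nat \<Rightarrow> real \<Rightarrow> real set" where
  "ent_set q \<theta> = {joint_entropy q p r | p r. distr q p \<and> distr q r \<and> coll_prob q p r = \<theta>}"

text \<open>F(theta): the maximum (supremum; attainment is part of the theorem).\<close>
definition F :: "nat \<Rightarrow> real \<Rightarrow> real" where
  "F q \<theta> = Sup (ent_set q \<theta>)"

definition alpha :: "nat \<Rightarrow> real \<Rightarrow> real" where
  "alpha q \<theta> = 1 / real q + sqrt ((1 - 1 / real q) * (\<theta> - 1 / real q))"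

end

theory Submission
  imports Defs "HOL-Real_Asymp.Real_Asymp"
begin

definition ent :: "nat \<Rightarrow> (nat \<Rightarrow> real) \<Rightarrow> real" where
  "ent q p = - (\<Sum>i=1..q. xlogx q (p i))"

definition hh :: "nat \<Rightarrow> real \<Rightarrow> real" where
  "hh q a = - a * log (real q) a - (1 - a) * log (real q) (1 - a) + (1 - a) * log (real q) (real q - 1)"

lemma xlogx_eq: "xlogx q z = z * ln z / ln (real q)"
  by (simp add: xlogx_def log_def)

lemma xlogx_mult:
  assumes "0 \<le> x" "0 \<le> y"
  shows "xlogx q (x*y) = y * xlogx q x + x * xlogx q y"
proof (cases "x = 0 \<or> y = 0")
  case True then show ?thesis by (auto simp: xlogx_def)
next
  case False
  then have "x > 0" "y > 0" using assms by auto
  then show ?thesis by (simp add: xlogx_eq ln_mult field_simps add_divide_distrib)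
qed

lemma joint_ent:
  assumes "distr q p" "distr q r"
  shows "joint_entropy q p r = ent q p + ent q r"
proof -
  have "(\<Sum>i=1..q. \<Sum>j=1..q. xlogx q (p i * r j))
      = (\<Sum>i=1..q. \<Sum>j=1..q. r j * xlogx q (p i) + p i * xlogx q (r j))"
    using assms by (intro sum.cong refl xlogx_mult) (auto simp: distr_def)
  also have "\<dots> = (\<Sum>i=1..q. xlogx q (p i) * (\<Sum>j=1..q. r j) + p i * (\<Sum>j=1..q. xlogx q (r j)))"
    by (simp add: sum.distrib sum_distrib_left sum_distrib_right mult.commute)
  also have "\<dots> = (\<Sum>i=1..q. xlogx q (p i)) + (\<Sum>j=1..q. xlogx q (r j))"
    using assms by (simp add: distr_def sum.distrib flip: sum_distrib_right)
  finally show ?thesis by (simp add: joint_entropy_def ent_def)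
qed

lemma xlnx_tangent:
  fixes a m :: real
  assumes "0 \<le> a" "0 < m"
  shows "a * ln a \<ge> m * ln m + (a - m) * (ln m + 1)"
proof (cases "a = 0")
  case True then show ?thesis using assms by (simp add: algebra_simps)
next
  case False
  then have a: "a > 0" using assms by simp
  have "ln (m/a) \<le> m/a - 1" using a assms by (intro ln_le_minus_one) simp
  then have "a * ln (m/a) \<le> a * (m/a - 1)" using a by (intro mult_left_mono) auto
  moreover have "a * ln (m/a) = a * ln m - a * ln a" using a assms by (simp add: ln_div algebra_simps)
  moreover have "a * (m/a - 1) = m - a" using a by (simp add: field_simps)
  ultimately have "a * ln m - a * ln a \<le> m - a" by simp
  then show ?thesis by (simp add: algebra_simps)
qed

lemma xlnx_convex:
  fixes a b t :: real
  assumes "0 \<le> a" "0 \<le> b" "0 \<le> t" "t \<le> 1"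
  shows "((1-t)*a + t*b) * ln ((1-t)*a + t*b) \<le> (1-t) * (a * ln a) + t * (b * ln b)"
proof (cases "(1-t)*a + t*b = 0")
  case True
  have "(1-t)*a \<ge> 0" "t*b \<ge> 0" using assms by auto
  then have "(1-t)*a = 0" "t*b = 0" using True by linarith+
  then have z: "(1-t) * (a * ln a) = 0" "t * (b * ln b) = 0" by (metis mult.assoc mult_zero_left)+
  have "((1-t)*a + t*b) * ln ((1-t)*a + t*b) = 0" using True by simp
  with z show ?thesis by linarith
next
  case False
  define m where "m = (1-t)*a + t*b"
  have "m \<ge> 0" using assms by (simp add: m_def)
  then have m: "m > 0" using False m_def by simp
  have A: "a * ln a \<ge> m * ln m + (a - m) * (ln m + 1)" using xlnx_tangent assms m by simp
  have B: "b * ln b \<ge> m * ln m + (b - m) * (ln m + 1)" using xlnx_tangent assms m by simp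
  have "(1-t) * (a * ln a) + t * (b * ln b) \<ge> (1-t) * (m * ln m + (a - m) * (ln m + 1)) + t * (m * ln m + (b - m) * (ln m + 1))"
    using A B assms by (intro add_mono mult_left_mono) auto
  also have "(1-t) * (m * ln m + (a - m) * (ln m + 1)) + t * (m * ln m + (b - m) * (ln m + 1)) = m * ln m"
    by (simp add: m_def algebra_simps)
  finally show ?thesis by (simp add: m_def)
qed

lemma lnq_pos: "q \<ge> 2 \<Longrightarrow> ln (real q) > 0"
  by simp

lemma ent_eq: "ent q p = - (\<Sum>i=1..q. p i * ln (p i)) / ln (real q)"
  by (simp add: ent_def xlogx_eq sum_divide_distrib)

lemma ent_concave:
  assumes "\<forall>i\<in>{1..q}. 0 \<le> p i" "\<forall>i\<in>{1..q}. 0 \<le> r i" "0 \<le> t" "t \<le> 1" "q \<ge> 2"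
  shows "ent q (\<lambda>i. (1-t) * p i + t * r i) \<ge> (1-t) * ent q p + t * ent q r"
proof -
  have L: "ln (real q) > 0" using assms by simp
  have "(\<Sum>i=1..q. ((1-t) * p i + t * r i) * ln ((1-t) * p i + t * r i))
      \<le> (\<Sum>i=1..q. (1-t) * (p i * ln (p i)) + t * (r i * ln (r i)))"
    using assms by (intro sum_mono xlnx_convex) auto
  also have "\<dots> = (1-t) * (\<Sum>i=1..q. p i * ln (p i)) + t * (\<Sum>i=1..q. r i * ln (r i))"
    by (simp add: sum.distrib sum_distrib_left)
  finally have *: "(\<Sum>i=1..q. ((1-t) * p i + t * r i) * ln ((1-t) * p i + t * r i))
      \<le> (1-t) * (\<Sum>i=1..q. p i * ln (p i)) + t * (\<Sum>i=1..q. r i * ln (r i))" .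
  show ?thesis unfolding ent_eq using * L
    by (simp add: divide_simps)
qed

lemma distr_le1: "distr q p \<Longrightarrow> i \<in> {1..q} \<Longrightarrow> p i \<le> 1"
  unfolding distr_def
  using member_le_sum[of i "{1..q}" p] by auto

lemma ent_le_1:
  assumes "distr q p" "q \<ge> 2"
  shows "ent q p \<le> 1"
proof -
  have L: "ln (real q) > 0" using assms by simp
  define m :: real where "m = 1 / real q"
  have m: "m > 0" using assms by (simp add: m_def)
  have "(\<Sum>i=1..q. p i * ln (p i)) \<ge> (\<Sum>i=1..q. m * ln m + (p i - m) * (ln m + 1))"
    using assms m by (intro sum_mono xlnx_tangent) (auto simp: distr_def)
  also have "(\<Sum>i=1..q. m * ln m + (p i - m) * (ln m + 1)) = real q * m * ln m + ((\<Sum>i=1..q. p i) - real q * m) * (ln m + 1)"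
    by (simp add: sum.distrib sum_subtractf flip: sum_distrib_right)
  also have "\<dots> = - ln (real q)"
    using assms by (simp add: m_def distr_def ln_div)
  finally show ?thesis unfolding ent_eq using L by (simp add: divide_simps)
qed

lemma ent_ge_0:
  assumes "distr q p" "q \<ge> 2"
  shows "ent q p \<ge> 0"
proof -
  have L: "ln (real q) > 0" using assms by simp
  have "(\<Sum>i=1..q. p i * ln (p i)) \<le> 0"
  proof (intro sum_nonpos)
    fix i assume i: "i \<in> {1..q}"
    have "0 \<le> p i" "p i \<le> 1" using assms i distr_le1 by (auto simp: distr_def)
    then show "p i * ln (p i) \<le> 0"
      by (cases "p i = 0") (auto intro!: mult_nonneg_nonpos)
  qed
  then show ?thesis unfolding ent_eq using L by (simp add: divide_simps)
qed


definition Dv :: "real \<Rightarrow> real \<Rightarrow> real" where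
  "Dv \<beta> x = x * ln x - x * ln \<beta> - x + \<beta>"

lemma g_decr:
  fixes \<beta> x y :: real
  assumes "0 < \<beta>" "0 < x" "x \<le> y"
  shows "Dv \<beta> y - (y-\<beta>)^2/(2*\<beta>) \<le> Dv \<beta> x - (x-\<beta>)^2/(2*\<beta>)"
proof -
  let ?g = "\<lambda>z. z * ln z - z * ln \<beta> - z + \<beta> - (z-\<beta>)^2/(2*\<beta>)"
  have d: "DERIV ?g z :> (ln z - ln \<beta> - (z-\<beta>)/\<beta>)" if "z > 0" for z
    using that assms by (auto intro!: derivative_eq_intros simp: field_simps power2_eq_square)
  have nonpos: "ln z - ln \<beta> - (z-\<beta>)/\<beta> \<le> 0" if "z > 0" for z
  proof -
    have "ln (z/\<beta>) \<le> z/\<beta> - 1" using that assms by (intro ln_le_minus_one) simp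
    moreover have "ln (z/\<beta>) = ln z - ln \<beta>" using that assms by (simp add: ln_div)
    moreover have "z/\<beta> - 1 = (z-\<beta>)/\<beta>" using assms by (simp add: field_simps)
    ultimately show ?thesis by simp
  qed
  have "?g y \<le> ?g x"
  proof (rule DERIV_nonpos_imp_nonincreasing[of x y ?g])
    show "x \<le> y" using assms by simp
    fix z assume "x \<le> z" "z \<le> y"
    then have "z > 0" using assms by simp
    then show "\<exists>y. DERIV ?g z :> y \<and> y \<le> 0" using d nonpos by blast
  qed
  then show ?thesis by (simp add: Dv_def)
qed

lemma N_nonpos:
  fixes \<beta> x :: real
  assumes "0 < \<beta>" "\<beta> \<le> x"
  shows "(x-\<beta>) * (ln x - ln \<beta>) - 2 * Dv \<beta> x \<le> 0"
proof -
  let ?N = "\<lambda>z. (z-\<beta>) * (ln z - ln \<beta>) - 2 * (z * ln z - z * ln \<beta> - z + \<beta>)"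
  have d: "DERIV ?N z :> (1 - \<beta>/z - (ln z - ln \<beta>))" if "z > 0" for z
    using that assms by (auto intro!: derivative_eq_intros simp: field_simps)
  have nonpos: "1 - \<beta>/z - (ln z - ln \<beta>) \<le> 0" if "z > 0" for z
  proof -
    have "ln (\<beta>/z) \<le> \<beta>/z - 1" using that assms by (intro ln_le_minus_one) simp
    moreover have "ln (\<beta>/z) = ln \<beta> - ln z" using that assms by (simp add: ln_div)
    ultimately show ?thesis by simp
  qed
  have "?N x \<le> ?N \<beta>"
  proof (rule DERIV_nonpos_imp_nonincreasing[of \<beta> x ?N])
    show "\<beta> \<le> x" using assms by simp
    fix z assume "\<beta> \<le> z" "z \<le> x"
    then have "z > 0" using assms by simp
    then show "\<exists>y. DERIV ?N z :> y \<and> y \<le> 0" using d nonpos by blast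
  qed
  then show ?thesis by (simp add: Dv_def)
qed

lemma R_decr:
  fixes \<beta> x y :: real
  assumes "0 < \<beta>" "\<beta> < x" "x \<le> y"
  shows "Dv \<beta> y / (y-\<beta>)^2 \<le> Dv \<beta> x / (x-\<beta>)^2"
proof -
  let ?R = "\<lambda>z. (z * ln z - z * ln \<beta> - z + \<beta>) / (z-\<beta>)^2"
  have d: "DERIV ?R z :> (((ln z - ln \<beta>) * (z-\<beta>)^2 - Dv \<beta> z * (2*(z-\<beta>))) / ((z-\<beta>)^2 * (z-\<beta>)^2))"
    if "z > \<beta>" for z
  proof -
    have h: "\<beta> * \<beta> + z * z \<noteq> \<beta> * (z * 2)"
    proof
      assume "\<beta> * \<beta> + z * z = \<beta> * (z * 2)"
      then have "(z-\<beta>)*(z-\<beta>) = 0" by (simp add: algebra_simps)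
      with that show False by simp
    qed
    show ?thesis
      using that assms h by (auto intro!: derivative_eq_intros simp: Dv_def field_simps power2_eq_square)
  qed
  have nonpos: "((ln z - ln \<beta>) * (z-\<beta>)^2 - Dv \<beta> z * (2*(z-\<beta>))) / ((z-\<beta>)^2 * (z-\<beta>)^2) \<le> 0"
    if "z > \<beta>" for z
  proof -
    have "(ln z - ln \<beta>) * (z-\<beta>)^2 - Dv \<beta> z * (2*(z-\<beta>)) = (z-\<beta>) * ((z-\<beta>) * (ln z - ln \<beta>) - 2 * Dv \<beta> z)"
      by (simp add: algebra_simps power2_eq_square)
    also have "\<dots> \<le> 0" using that N_nonpos[of \<beta> z] assms by (intro mult_nonneg_nonpos) auto
    finally show ?thesis by (intro divide_nonpos_nonneg) auto
  qed
  have "?R y \<le> ?R x"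
  proof (rule DERIV_nonpos_imp_nonincreasing[of x y ?R])
    show "x \<le> y" using assms by simp
    fix z assume "x \<le> z" "z \<le> y"
    then have "z > \<beta>" using assms by simp
    then show "\<exists>y. DERIV ?R z :> y \<and> y \<le> 0" using d nonpos by blast
  qed
  then show ?thesis by (simp add: Dv_def)
qed

lemma Dv_beta: "Dv \<beta> \<beta> = 0" by (simp add: Dv_def)

lemma key_ineq:
  fixes \<alpha> \<beta> x :: real
  assumes "0 < \<beta>" "\<beta> < \<alpha>" "0 \<le> x" "x \<le> \<alpha>"
  shows "(x-\<beta>)^2 * Dv \<beta> \<alpha> \<le> (\<alpha>-\<beta>)^2 * Dv \<beta> x"
proof (cases "x = \<beta>")
  case True then show ?thesis by (simp add: Dv_beta)
next
  case False
  show ?thesis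
  proof (cases "x < \<beta>")
    case True
    have Dx: "Dv \<beta> x \<ge> (x-\<beta>)^2/(2*\<beta>)"
    proof (cases "x = 0")
      case True then show ?thesis using assms by (simp add: Dv_def power2_eq_square field_simps)
    next
      case False
      then have "x > 0" using assms by simp
      from g_decr[OF assms(1) this, of \<beta>] True show ?thesis by (simp add: Dv_beta)
    qed
    have Da: "Dv \<beta> \<alpha> \<le> (\<alpha>-\<beta>)^2/(2*\<beta>)"
      using g_decr[OF assms(1) assms(1), of \<alpha>] assms by (simp add: Dv_beta)
    have "(x-\<beta>)^2 * Dv \<beta> \<alpha> \<le> (x-\<beta>)^2 * ((\<alpha>-\<beta>)^2/(2*\<beta>))"
      by (rule mult_left_mono[OF Da]) simp
    also have "\<dots> = (\<alpha>-\<beta>)^2 * ((x-\<beta>)^2/(2*\<beta>))" by simp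
    also have "\<dots> \<le> (\<alpha>-\<beta>)^2 * Dv \<beta> x"
      by (rule mult_left_mono[OF Dx]) simp
    finally show ?thesis .
  next
    case False
    then have "\<beta> < x" using \<open>x \<noteq> \<beta>\<close> by simp
    from R_decr[OF assms(1) this assms(4)]
    have "Dv \<beta> \<alpha> / (\<alpha>-\<beta>)^2 \<le> Dv \<beta> x / (x-\<beta>)^2" .
    moreover have A: "(\<alpha>-\<beta>)^2 > 0" and B: "(x-\<beta>)^2 > 0" using assms \<open>\<beta> < x\<close> by auto
    ultimately have "Dv \<beta> \<alpha> / (\<alpha>-\<beta>)^2 * ((\<alpha>-\<beta>)^2 * (x-\<beta>)^2) \<le> Dv \<beta> x / (x-\<beta>)^2 * ((\<alpha>-\<beta>)^2 * (x-\<beta>)^2)"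
      by (intro mult_right_mono) auto
    also have "Dv \<beta> x / (x-\<beta>)^2 * ((\<alpha>-\<beta>)^2 * (x-\<beta>)^2) = (\<alpha>-\<beta>)^2 * Dv \<beta> x"
      using B by simp
    also have "Dv \<beta> \<alpha> / (\<alpha>-\<beta>)^2 * ((\<alpha>-\<beta>)^2 * (x-\<beta>)^2) = (x-\<beta>)^2 * Dv \<beta> \<alpha>"
      using A by simp
    finally show ?thesis by simp
  qed
qed

lemma sym_bound_nats:
  assumes "q \<ge> 2" "distr q m" "0 < \<beta>" "\<beta> < \<alpha>" "\<alpha> + (real q - 1) * \<beta> = 1"
    "(\<Sum>i=1..q. (m i)^2) = \<alpha>^2 + (real q - 1) * \<beta>^2"
  shows "(\<Sum>i=1..q. m i * ln (m i)) \<ge> \<alpha> * ln \<alpha> + (real q - 1) * (\<beta> * ln \<beta>)"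
proof -
  have sm: "(\<Sum>i=1..q. m i) = 1" and nn: "\<And>i. i \<in> {1..q} \<Longrightarrow> 0 \<le> m i"
    using assms(2) by (auto simp: distr_def)
  have "(\<Sum>i=1..q. (m i - \<beta>)^2) = (\<Sum>i=1..q. (m i)^2 - 2 * \<beta> * m i + \<beta>^2)"
    by (intro sum.cong) (auto simp: power2_diff algebra_simps)
  also have "\<dots> = (\<Sum>i=1..q. (m i)^2) - 2 * \<beta> * (\<Sum>i=1..q. m i) + real q * \<beta>^2"
    by (simp add: sum.distrib sum_subtractf sum_distrib_left)
  also have "\<dots> = (\<alpha> - \<beta>)^2"
  proof -
    have "(\<Sum>i=1..q. (m i)^2) - 2 * \<beta> * (\<Sum>i=1..q. m i) + real q * \<beta>^2
        = \<alpha>^2 + (real q - 1) * \<beta>^2 - 2 * \<beta> + real q * \<beta>^2" using assms(6) sm by simp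
    also have "\<dots> = (\<alpha>-\<beta>)^2 + 2 * \<beta> * (\<alpha> + (real q - 1) * \<beta> - 1)"
      by (simp add: power2_eq_square algebra_simps)
    also have "\<dots> = (\<alpha>-\<beta>)^2"
    proof -
      have z: "\<alpha> + (real q - 1) * \<beta> - 1 = 0" using assms(5) by linarith
      show ?thesis unfolding z by simp
    qed
    finally show ?thesis .
  qed
  finally have S: "(\<Sum>i=1..q. (m i - \<beta>)^2) = (\<alpha> - \<beta>)^2" .
  have le: "m i \<le> \<alpha>" if i: "i \<in> {1..q}" for i
  proof -
    have "(m i - \<beta>)^2 \<le> (\<Sum>i=1..q. (m i - \<beta>)^2)"
      using i by (intro member_le_sum) auto
    then have "(m i - \<beta>)^2 \<le> (\<alpha> - \<beta>)^2" using S by simp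
    then have "m i - \<beta> \<le> \<alpha> - \<beta>" using assms(4) power2_le_imp_le[of "m i - \<beta>" "\<alpha> - \<beta>"] by simp
    then show ?thesis by simp
  qed
  have "(\<alpha>-\<beta>)^2 * Dv \<beta> \<alpha> = (\<Sum>i=1..q. (m i - \<beta>)^2 * Dv \<beta> \<alpha>)"
    by (subst S[symmetric]) (simp add: sum_distrib_right)
  also have "\<dots> \<le> (\<Sum>i=1..q. (\<alpha>-\<beta>)^2 * Dv \<beta> (m i))"
    using assms(3,4) nn le by (intro sum_mono key_ineq) auto
  also have "\<dots> = (\<alpha>-\<beta>)^2 * (\<Sum>i=1..q. Dv \<beta> (m i))"
    by (simp add: sum_distrib_left)
  finally have Dle: "Dv \<beta> \<alpha> \<le> (\<Sum>i=1..q. Dv \<beta> (m i))"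
    using assms(3,4) by (simp add: mult_le_cancel_left_pos)
  have "(\<Sum>i=1..q. Dv \<beta> (m i)) = (\<Sum>i=1..q. m i * ln (m i)) - (\<Sum>i=1..q. m i) * ln \<beta> - (\<Sum>i=1..q. m i) + real q * \<beta>"
    unfolding Dv_def by (simp add: sum.distrib sum_subtractf sum_distrib_right)
  with Dle sm have *: "\<alpha> * ln \<alpha> - \<alpha> * ln \<beta> - \<alpha> + \<beta> \<le> (\<Sum>i=1..q. m i * ln (m i)) - ln \<beta> - 1 + real q * \<beta>"
    unfolding Dv_def by simp
  have e1: "(real q - 1) * (\<beta> * ln \<beta>) = ln \<beta> - \<alpha> * ln \<beta>"
  proof -
    have "(real q - 1) * \<beta> = 1 - \<alpha>" using assms(5) by simp
    then have "(real q - 1) * \<beta> * ln \<beta> = (1 - \<alpha>) * ln \<beta>" by simp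
    then show ?thesis by (simp add: algebra_simps)
  qed
  have e2: "real q * \<beta> = 1 - \<alpha> + \<beta>" using assms(5) by (simp add: algebra_simps)
  show ?thesis using * e1 e2 by linarith
qed


lemma sum_if1:
  assumes "q \<ge> 1"
  shows "(\<Sum>i=1..q. f (if i = 1 then a else b)) = f a + (real q - 1) * (f b :: real)"
proof -
  have "(\<Sum>i=1..q. f (if i = 1 then a else b)) = f a + (\<Sum>i=Suc 1..q. f (if i = 1 then a else b))"
    using assms by (subst sum.atLeast_Suc_atMost) auto
  also have "(\<Sum>i=Suc 1..q. f (if i = 1 then a else b)) = (\<Sum>i=Suc 1..q. f b)"
    by (intro sum.cong) auto
  also have "\<dots> = real (q - 1) * f b" by simp
  also have "real (q - 1) = real q - 1" using assms by simp
  finally show ?thesis .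
qed

lemma alpha_facts:
  assumes "q \<ge> 2" "1 / real q \<le> \<theta>" "\<theta> \<le> 1"
  shows "1 / real q \<le> alpha q \<theta>" "alpha q \<theta> \<le> 1"
    "(alpha q \<theta>)^2 + (real q - 1) * ((1 - alpha q \<theta>) / (real q - 1))^2 = \<theta>"
proof -
  define d where "d = sqrt ((1 - 1 / real q) * (\<theta> - 1 / real q))"
  have q1: "real q - 1 > 0" "real q > 0" using assms by auto
  have qq: "1 / real q \<le> 1" using assms by simp
  have nn1: "0 \<le> 1 - 1 / real q" using qq by simp
  have nn2: "0 \<le> \<theta> - 1 / real q" using assms by simp
  have nn: "(1 - 1 / real q) * (\<theta> - 1 / real q) \<ge> 0" using nn1 nn2 by (rule mult_nonneg_nonneg)
  have d0: "d \<ge> 0" unfolding d_def using nn by simp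
  have d2: "d^2 = (1 - 1 / real q) * (\<theta> - 1 / real q)" unfolding d_def by (rule real_sqrt_pow2[OF nn])
  have a: "alpha q \<theta> = 1 / real q + d" by (simp add: alpha_def d_def)
  show "1 / real q \<le> alpha q \<theta>" using a d0 by simp
  have "(1 - 1 / real q) * (\<theta> - 1 / real q) \<le> (1 - 1 / real q) * (1 - 1 / real q)"
    using assms qq by (intro mult_left_mono) auto
  then have "d \<le> sqrt ((1 - 1 / real q) * (1 - 1 / real q))" unfolding d_def
    by (rule real_sqrt_le_mono)
  also have "\<dots> = 1 - 1 / real q" using qq by simp
  finally show "alpha q \<theta> \<le> 1" using a by simp
  have "(1 - alpha q \<theta>) / (real q - 1) = 1 / real q - d / (real q - 1)"
    unfolding a using q1 by (simp add: field_simps)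
  then have "(alpha q \<theta>)^2 + (real q - 1) * ((1 - alpha q \<theta>) / (real q - 1))^2
      = (1 / real q + d)^2 + (real q - 1) * (1 / real q - d / (real q - 1))^2" by (simp add: a)
  also have "\<dots> = 1 / real q + d^2 * real q / (real q - 1)"
  proof -
    define Q where "Q = real q"
    have Q: "Q - 1 \<noteq> 0" "Q \<noteq> 0" using q1 by (auto simp: Q_def)
    have e1: "(Q - 1) * (1 / Q - d / (Q - 1))^2 = (Q - 1) * (1/Q)^2 - 2 * (1/Q) * d + d^2 / (Q - 1)"
    proof -
      have f1: "(Q - 1) * (d / (Q - 1)) = d" using Q by simp
      have f2: "(Q - 1) * (d / (Q - 1))^2 = d^2 / (Q - 1)" using Q by (simp add: power2_eq_square)
      have "(Q - 1) * (1 / Q - d / (Q - 1))^2 = (Q - 1) * (1/Q)^2 - 2 * (1/Q) * ((Q - 1) * (d / (Q - 1))) + (Q - 1) * (d / (Q - 1))^2"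
        by (simp add: power2_diff algebra_simps)
      then show ?thesis unfolding f1 f2 .
    qed
    have e2: "(1 / Q + d)^2 = (1/Q)^2 + 2 * (1/Q) * d + d^2" by (simp add: power2_sum)
    have e3: "(1/Q)^2 + (Q - 1) * (1/Q)^2 = 1 / Q" using Q by (simp add: field_simps power2_eq_square)
    have e4: "d^2 + d^2 / (Q - 1) = d^2 * Q / (Q - 1)" using Q by (simp add: field_simps)
    have "(1 / Q + d)^2 + (Q - 1) * (1 / Q - d / (Q - 1))^2 = 1 / Q + d^2 * Q / (Q - 1)"
      unfolding e1 e2 using e3 e4 by linarith
    then show ?thesis by (simp add: Q_def)
  qed
  also have "\<dots> = \<theta>" unfolding d2 using q1 by (simp add: field_simps)
  finally show "(alpha q \<theta>)^2 + (real q - 1) * ((1 - alpha q \<theta>) / (real q - 1))^2 = \<theta>" .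
qed

lemma alpha_mono:
  assumes "q \<ge> 2" "1 / real q \<le> \<theta>1" "\<theta>1 \<le> \<theta>2"
  shows "alpha q \<theta>1 \<le> alpha q \<theta>2"
proof -
  have "1 / real q \<le> 1" using assms by simp
  then show ?thesis unfolding alpha_def using assms
    by (intro add_left_mono real_sqrt_le_mono mult_left_mono) auto
qed

lemma alpha_gt:
  assumes "q \<ge> 2" "1 / real q < \<theta>"
  shows "1 / real q < alpha q \<theta>"
proof -
  have "1 / real q < 1" using assms by simp
  then have "(1 - 1 / real q) * (\<theta> - 1 / real q) > 0" using assms by simp
  then show ?thesis unfolding alpha_def by simp
qed

lemma alpha_lt:
  assumes "q \<ge> 2" "\<theta> < 1"
  shows "alpha q \<theta> < 1"
proof -
  have qq: "1 / real q < 1" using assms by simp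
  have "sqrt ((1 - 1 / real q) * (\<theta> - 1 / real q)) < sqrt ((1 - 1 / real q) * (1 - 1 / real q))"
    using assms qq by (intro real_sqrt_less_mono mult_strict_left_mono) auto
  also have "\<dots> = 1 - 1 / real q" using qq by simp
  finally show ?thesis unfolding alpha_def by simp
qed

lemma alpha_at: "q \<ge> 2 \<Longrightarrow> alpha q (1 / real q) = 1 / real q"
  by (simp add: alpha_def)

lemma alpha_1: 
  assumes "q \<ge> 2" shows "alpha q 1 = 1"
proof -
  have "1 / real q \<le> 1" using assms by simp
  then show ?thesis by (simp add: alpha_def)
qed

lemma hh_ln: "hh q a = (- a * ln a - (1 - a) * ln (1 - a) + (1 - a) * ln (real q - 1)) / ln (real q)"
  by (simp add: hh_def log_def diff_divide_distrib add_divide_distrib)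

lemma hh_nats:
  assumes "q \<ge> 2" "a < 1"
  shows "hh q a = - (a * ln a + (real q - 1) * (((1 - a) / (real q - 1)) * ln ((1 - a) / (real q - 1)))) / ln (real q)"
proof -
  have q1: "real q - 1 > 0" using assms by simp
  have "ln ((1 - a) / (real q - 1)) = ln (1 - a) - ln (real q - 1)"
    using assms q1 by (simp add: ln_div)
  then have "(real q - 1) * (((1 - a) / (real q - 1)) * ln ((1 - a) / (real q - 1)))
     = (1 - a) * (ln (1 - a) - ln (real q - 1))" using q1 by simp
  then show ?thesis unfolding hh_ln by (simp add: algebra_simps)
qed

lemma hh_1: "hh q 1 = 0" by (simp add: hh_def)

lemma hh_inv:
  assumes "q \<ge> 2" shows "hh q (1 / real q) = 1"
proof -
  have L: "ln (real q) > 0" using assms by simp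
  have q0: "real q > 0" "real q - 1 > 0" using assms by auto
  have e1: "ln (1 / real q) = - ln (real q)" using q0 by (simp add: ln_div)
  have "1 - 1 / real q = (real q - 1) / real q" using q0 by (simp add: field_simps)
  then have e2: "ln (1 - 1 / real q) = ln (real q - 1) - ln (real q)" using q0 by (simp add: ln_div)
  have "- (1 / real q) * ln (1 / real q) - (1 - 1 / real q) * ln (1 - 1 / real q) + (1 - 1 / real q) * ln (real q - 1)
      = ln (real q)" unfolding e1 e2 using q0 by (simp add: field_simps)
  then show ?thesis unfolding hh_ln using L by simp
qed

lemma hh_nonneg:
  assumes "q \<ge> 2" "0 \<le> a" "a \<le> 1"
  shows "hh q a \<ge> 0"
proof -
  have L: "ln (real q) > 0" using assms by simp
  have t1: "- a * ln a \<ge> 0"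
  proof (cases "a = 0")
    case False then have "ln a \<le> 0" using assms by simp
    then show ?thesis using assms by (simp add: mult_nonneg_nonpos)
  qed simp
  have t2: "- (1 - a) * ln (1 - a) \<ge> 0"
  proof (cases "a = 1")
    case False then have "ln (1 - a) \<le> 0" using assms by simp
    moreover have "- (1 - a) * ln (1 - a) = (a - 1) * ln (1 - a)" by simp
    ultimately show ?thesis using assms by (simp only:) (intro mult_nonpos_nonpos, auto)
  qed simp
  have t3: "(1 - a) * ln (real q - 1) \<ge> 0" using assms by simp
  have "0 \<le> - a * ln a - (1 - a) * ln (1 - a) + (1 - a) * ln (real q - 1)" using t1 t2 t3 by linarith
  then show ?thesis unfolding hh_ln using L by (intro divide_nonneg_pos)
qed

lemma hh_antimono:
  assumes "q \<ge> 2" "1 / real q \<le> a" "a \<le> b" "b \<le> 1"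
  shows "hh q b \<le> hh q a"
proof (cases "b = 1")
  case True
  have "0 \<le> 1 / real q" by simp
  then have "0 \<le> a" using assms by linarith
  then show ?thesis using True hh_nonneg[of q a] assms hh_1 by simp
next
  case False
  then have b1: "b < 1" using assms by simp
  have q0: "real q > 0" "real q - 1 > 0" using assms by auto
  have L: "ln (real q) > 0" using assms by simp
  have a0: "a > 0" using assms q0 by (smt (verit) divide_pos_pos)
  let ?f = "\<lambda>z. (- z * ln z - (1 - z) * ln (1 - z) + (1 - z) * ln (real q - 1))"
  have d: "DERIV ?f z :> (ln (1 - z) - ln z - ln (real q - 1))" if "0 < z" "z < 1" for z
  proof -
    have d1: "DERIV (\<lambda>z. z * ln z) z :> ln z + 1" using that
      by (auto intro!: derivative_eq_intros)
    have d2: "DERIV (\<lambda>z. (1 - z) * ln (1 - z)) z :> - (ln (1 - z) + 1)" using that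
      by (auto intro!: derivative_eq_intros simp: field_simps)
    have d3: "DERIV (\<lambda>z. (1 - z) * ln (real q - 1)) z :> - ln (real q - 1)"
      by (auto intro!: derivative_eq_intros)
    have "DERIV (\<lambda>z. - (z * ln z) - (1 - z) * ln (1 - z) + (1 - z) * ln (real q - 1)) z
        :> (- (ln z + 1) - (- (ln (1 - z) + 1)) + (- ln (real q - 1)))"
      by (intro DERIV_add DERIV_diff DERIV_minus d1 d2 d3)
    then show ?thesis by simp
  qed
  have nonpos: "(ln (1 - z) - ln z - ln (real q - 1)) \<le> 0" if "1 / real q \<le> z" "z < 1" for z
  proof -
    have z0: "z > 0" using that q0 by (smt (verit) divide_pos_pos)
    have "1 \<le> real q * z" using that q0 by (simp add: field_simps)
    then have "1 - z \<le> z * (real q - 1)" by (simp add: algebra_simps)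
    then have "ln (1 - z) \<le> ln (z * (real q - 1))" using that by (subst ln_le_cancel_iff) auto
    also have "\<dots> = ln z + ln (real q - 1)" using z0 q0 by (simp add: ln_mult)
    finally show ?thesis by simp
  qed
  have "?f b \<le> ?f a"
  proof (rule DERIV_nonpos_imp_nonincreasing[of a b ?f])
    show "a \<le> b" by fact
    fix z assume z: "a \<le> z" "z \<le> b"
    then have "0 < z" "z < 1" "1 / real q \<le> z" using a0 b1 assms by auto
    then show "\<exists>y. DERIV ?f z :> y \<and> y \<le> 0" using d nonpos by blast
  qed
  then show ?thesis unfolding hh_ln using L by (simp add: divide_right_mono)
qed


lemma sym_bound:
  assumes "q \<ge> 2" "distr q m" "c = (\<Sum>i=1..q. (m i)^2)" "1 / real q \<le> c" "c \<le> 1"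
  shows "ent q m \<le> hh q (alpha q c)"
proof -
  have L: "ln (real q) > 0" using assms by simp
  have q0: "real q > 0" "real q - 1 > 0" using assms by auto
  have nn: "0 \<le> m i" "m i \<le> 1" if "i \<in> {1..q}" for i
    using assms(2) distr_le1[OF assms(2) that] that by (auto simp: distr_def)
  consider "c = 1 / real q" | "c = 1" | "1 / real q < c \<and> c < 1" using assms by linarith
  then show ?thesis
  proof cases
    case 1 then show ?thesis using ent_le_1[OF assms(2,1)] alpha_at[OF assms(1)] hh_inv[OF assms(1)] by simp
  next
    case 2
    have "(\<Sum>i=1..q. m i * (1 - m i)) = (\<Sum>i=1..q. m i) - (\<Sum>i=1..q. (m i)^2)"
      by (simp add: algebra_simps sum_subtractf power2_eq_square)
    also have "\<dots> = 0" using assms(2,3) 2 by (simp add: distr_def)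
    finally have "(\<Sum>i=1..q. m i * (1 - m i)) = 0" .
    moreover have "\<forall>i\<in>{1..q}. 0 \<le> m i * (1 - m i)" using nn by simp
    ultimately have z: "\<forall>i\<in>{1..q}. m i * (1 - m i) = 0"
      using sum_nonneg_eq_0_iff[of "{1..q}" "\<lambda>i. m i * (1 - m i)"] by simp
    have "(\<Sum>i=1..q. m i * ln (m i)) = 0"
    proof (intro sum.neutral ballI)
      fix i assume "i \<in> {1..q}"
      then have "m i = 0 \<or> m i = 1" using z by auto
      then show "m i * ln (m i) = 0" by auto
    qed
    then have "ent q m = 0" unfolding ent_eq by simp
    then show ?thesis using 2 alpha_1[OF assms(1)] hh_1 by simp
  next
    case 3
    define \<alpha> where "\<alpha> = alpha q c"
    define \<beta> where "\<beta> = (1 - \<alpha>) / (real q - 1)"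
    have a1: "1 / real q < \<alpha>" unfolding \<alpha>_def using alpha_gt assms 3 by auto
    have a2: "\<alpha> < 1" unfolding \<alpha>_def using alpha_lt assms 3 by auto
    have b0: "0 < \<beta>" unfolding \<beta>_def using a2 q0 by simp
    have "real q * (1 - \<alpha>) < real q - 1"
    proof -
      have "1 < real q * \<alpha>" using a1 q0 by (simp add: field_simps)
      then show ?thesis by (simp add: algebra_simps)
    qed
    then have "\<beta> < 1 / real q" unfolding \<beta>_def using q0 by (simp add: field_simps)
    then have ba: "\<beta> < \<alpha>" using a1 by simp
    have s1: "\<alpha> + (real q - 1) * \<beta> = 1" unfolding \<beta>_def using q0 by simp
    have s2: "(\<Sum>i=1..q. (m i)^2) = \<alpha>^2 + (real q - 1) * \<beta>^2"
      using alpha_facts(3)[OF assms(1) assms(4) assms(5)] assms(3) unfolding \<alpha>_def \<beta>_def by simp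
    have "(\<Sum>i=1..q. m i * ln (m i)) \<ge> \<alpha> * ln \<alpha> + (real q - 1) * (\<beta> * ln \<beta>)"
      by (rule sym_bound_nats[OF assms(1,2) b0 ba s1 s2])
    then have "- (\<Sum>i=1..q. m i * ln (m i)) \<le> - (\<alpha> * ln \<alpha> + (real q - 1) * (\<beta> * ln \<beta>))" by linarith
    then have "ent q m \<le> - (\<alpha> * ln \<alpha> + (real q - 1) * (\<beta> * ln \<beta>)) / ln (real q)"
      unfolding ent_eq using L by (intro divide_right_mono) auto
    also have "\<dots> = hh q \<alpha>" unfolding \<beta>_def using hh_nats[OF assms(1) a2] by simp
    finally show ?thesis unfolding \<alpha>_def .
  qed
qed

lemma upper:
  assumes "q \<ge> 2" "distr q p" "distr q r" "coll_prob q p r = \<theta>" "1 / real q \<le> \<theta>" "\<theta> \<le> 1"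
  shows "ent q p + ent q r \<le> 2 * hh q (alpha q \<theta>)"
proof -
  define m where "m = (\<lambda>i. (1 - 1/2) * p i + 1/2 * r i)"
  have pn: "\<forall>i\<in>{1..q}. 0 \<le> p i" and rn: "\<forall>i\<in>{1..q}. 0 \<le> r i"
    and ps: "(\<Sum>i=1..q. p i) = 1" and rs: "(\<Sum>i=1..q. r i) = 1"
    using assms by (auto simp: distr_def)
  have conc: "ent q m \<ge> (1 - 1/2) * ent q p + 1/2 * ent q r"
    unfolding m_def using ent_concave[of q p r "1/2"] pn rn assms(1) by simp
  have mn: "0 \<le> m i" "m i \<le> 1" if "i \<in> {1..q}" for i
    using pn rn that distr_le1[OF assms(2) that] distr_le1[OF assms(3) that] unfolding m_def by auto
  have "(\<Sum>i=1..q. m i) = (1 - 1/2) * (\<Sum>i=1..q. p i) + 1/2 * (\<Sum>i=1..q. r i)"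
    unfolding m_def by (simp add: sum.distrib sum_distrib_left)
  then have ms: "(\<Sum>i=1..q. m i) = 1" using ps rs by simp
  have dm: "distr q m" using mn ms by (simp add: distr_def)
  define c where "c = (\<Sum>i=1..q. (m i)^2)"
  have "\<theta> = (\<Sum>i=1..q. p i * r i)" using assms(4) by (simp add: coll_prob_def)
  also have "\<dots> \<le> c" unfolding c_def
  proof (intro sum_mono)
    fix i
    have "(m i)^2 - p i * r i = ((p i - r i) / 2)^2" unfolding m_def by (simp add: power2_eq_square algebra_simps)
    then show "p i * r i \<le> (m i)^2" by (smt (verit) zero_le_power2)
  qed
  finally have ct: "\<theta> \<le> c" .
  have "c \<le> (\<Sum>i=1..q. m i)" unfolding c_def
  proof (intro sum_mono)
    fix i assume "i \<in> {1..q}"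
    then show "(m i)^2 \<le> m i" using mn by (simp add: power2_eq_square mult_left_le)
  qed
  then have c1: "c \<le> 1" using ms by simp
  have "ent q m \<le> hh q (alpha q c)"
    using sym_bound[OF assms(1) dm c_def] ct c1 assms by simp
  also have "\<dots> \<le> hh q (alpha q \<theta>)"
    using hh_antimono[OF assms(1)] alpha_facts[OF assms(1,5,6)] alpha_facts(2)[OF assms(1) _ c1]
      alpha_mono[OF assms(1,5) ct] assms ct by (meson order_trans)
  finally show ?thesis using conc by simp
qed

lemma achieve:
  assumes "q \<ge> 2" "1 / real q \<le> \<theta>" "\<theta> \<le> 1"
  defines "v \<equiv> \<lambda>i::nat. if i = 1 then alpha q \<theta> else (1 - alpha q \<theta>) / (real q - 1)"
  shows "distr q v" "coll_prob q v v = \<theta>" "ent q v = hh q (alpha q \<theta>)"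
proof -
  have q0: "real q > 0" "real q - 1 > 0" "q \<ge> 1" using assms by auto
  have L: "ln (real q) > 0" using assms by simp
  note af = alpha_facts[OF assms(1,2,3)]
  have a0: "0 \<le> alpha q \<theta>" using af(1) by (smt (verit) divide_nonneg_nonneg of_nat_0_le_iff)
  have b0: "0 \<le> (1 - alpha q \<theta>) / (real q - 1)" using af(2) q0 by simp
  have "(\<Sum>i=1..q. v i) = alpha q \<theta> + (real q - 1) * ((1 - alpha q \<theta>) / (real q - 1))"
    unfolding v_def using sum_if1[OF q0(3), of "\<lambda>x. x"] by simp
  also have "\<dots> = 1" using q0 by simp
  finally show "distr q v" using a0 b0 unfolding distr_def v_def by auto
  have "coll_prob q v v = (alpha q \<theta>)^2 + (real q - 1) * ((1 - alpha q \<theta>) / (real q - 1))^2"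
    unfolding coll_prob_def v_def using sum_if1[OF q0(3), of "\<lambda>x. x * x"] by (simp add: power2_eq_square)
  then show "coll_prob q v v = \<theta>" using af(3) by simp
  have e: "ent q v = - (xlogx q (alpha q \<theta>) + (real q - 1) * xlogx q ((1 - alpha q \<theta>) / (real q - 1)))"
    unfolding ent_def v_def using sum_if1[OF q0(3), of "xlogx q"] by simp
  show "ent q v = hh q (alpha q \<theta>)"
  proof (cases "alpha q \<theta> = 1")
    case True
    then show ?thesis unfolding e by (simp add: hh_1 xlogx_def)
  next
    case False
    then have "alpha q \<theta> < 1" using af(2) by simp
    from hh_nats[OF assms(1) this] show ?thesis unfolding e xlogx_eq using assms(1) by (simp add: add_divide_distrib diff_divide_distrib)
  qed
qed


definition Dset :: "nat \<Rightarrow> (nat \<Rightarrow> real) set" where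
  "Dset q = {p. distr q p \<and> (\<forall>i. i \<notin> {1..q} \<longrightarrow> p i = 0)}"

definition Kset :: "nat \<Rightarrow> real \<Rightarrow> ((nat \<Rightarrow> real) \<times> (nat \<Rightarrow> real)) set" where
  "Kset q \<theta> = {x. fst x \<in> Dset q \<and> snd x \<in> Dset q \<and> coll_prob q (fst x) (snd x) = \<theta>}"

definition JE :: "nat \<Rightarrow> (nat \<Rightarrow> real) \<times> (nat \<Rightarrow> real) \<Rightarrow> real" where
  "JE q x = ent q (fst x) + ent q (snd x)"

lemma xlnx_cont: "continuous_on {0..} (\<lambda>z::real. z * ln z)"
proof -
  have "continuous (at x within {0..}) (\<lambda>z::real. z * ln z)" if "x \<in> {0..}" for x
  proof (cases "x = 0")
    case True
    have "((\<lambda>x::real. x * ln x) \<longlongrightarrow> 0) (at_right 0)" by real_asymp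
    then show ?thesis using True by (simp add: continuous_within at_within_Ici_at_right)
  next
    case False
    then have "x > 0" using that by simp
    then have "isCont (\<lambda>z::real. z * ln z) x" by (auto intro!: continuous_intros)
    then show ?thesis by (simp add: continuous_at_imp_continuous_within)
  qed
  then show ?thesis by (simp add: continuous_on_eq_continuous_within)
qed

lemma xlogx_cont: "continuous_on {0..} (xlogx q)"
proof -
  have "continuous_on {0..} (\<lambda>z::real. z * ln z * (1 / ln (real q)))"
    by (intro continuous_on_mult xlnx_cont continuous_on_const)
  moreover have "xlogx q = (\<lambda>z::real. z * ln z * (1 / ln (real q)))"
    by (simp add: xlogx_eq[abs_def])
  ultimately show ?thesis by simp
qed

lemma cont_fst_i: "continuous_on S (\<lambda>x::('a \<Rightarrow> real) \<times> ('a \<Rightarrow> real). fst x i)"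
  using continuous_on_product_then_coordinatewise[OF continuous_on_fst[OF continuous_on_id]] .

lemma cont_snd_i: "continuous_on S (\<lambda>x::('a \<Rightarrow> real) \<times> ('a \<Rightarrow> real). snd x i)"
  using continuous_on_product_then_coordinatewise[OF continuous_on_snd[OF continuous_on_id]] .

lemma compact_Dset: "compact (Dset q)"
proof -
  define S where "S = (\<lambda>i::nat. if i \<in> {1..q} then {0..1::real} else {0})"
  have "compactin (product_topology (\<lambda>i. euclidean) UNIV) (PiE UNIV S)"
    by (subst compactin_PiE) (auto simp: S_def)
  then have c1: "compact (PiE UNIV S)" by (simp add: euclidean_product_topology)
  have "continuous_on UNIV (\<lambda>p::nat\<Rightarrow>real. \<Sum>i=1..q. p i)"
    by (intro continuous_on_sum) simp
  then have c2: "closed {p::nat\<Rightarrow>real. (\<Sum>i=1..q. p i) = 1}"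
    by (intro closed_Collect_eq) auto
  have "Dset q = PiE UNIV S \<inter> {p. (\<Sum>i=1..q. p i) = 1}"
  proof (intro equalityI subsetI)
    fix p assume p: "p \<in> Dset q"
    then have d: "distr q p" by (simp add: Dset_def)
    have "p i \<in> S i" for i
      using p distr_le1[OF d, of i] by (auto simp: S_def Dset_def distr_def)
    then show "p \<in> PiE UNIV S \<inter> {p. (\<Sum>i=1..q. p i) = 1}"
      using d by (auto simp: PiE_UNIV_domain distr_def)
  next
    fix p assume "p \<in> PiE UNIV S \<inter> {p. (\<Sum>i=1..q. p i) = 1}"
    then have pS: "\<And>i. p i \<in> S i" and ps: "(\<Sum>i=1..q. p i) = 1" by (auto simp: PiE_UNIV_domain)
    have "0 \<le> p i" if "i \<in> {1..q}" for i using pS[of i] that by (simp add: S_def)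
    moreover have "p i = 0" if "i \<notin> {1..q}" for i using pS[of i] that unfolding S_def by (auto split: if_splits)
    ultimately show "p \<in> Dset q" using ps by (simp add: Dset_def distr_def)
  qed
  then show ?thesis using c1 c2 by (simp add: compact_Int_closed)
qed

lemma compact_Kset: "compact (Kset q \<theta>)"
proof -
  have "continuous_on UNIV (\<lambda>x::(nat\<Rightarrow>real)\<times>(nat\<Rightarrow>real). \<Sum>i=1..q. fst x i * snd x i)"
    by (intro continuous_on_sum continuous_on_mult cont_fst_i cont_snd_i)
  then have c2: "closed {x::(nat\<Rightarrow>real)\<times>(nat\<Rightarrow>real). (\<Sum>i=1..q. fst x i * snd x i) = \<theta>}"
    by (intro closed_Collect_eq) auto
  have "Kset q \<theta> = (Dset q \<times> Dset q) \<inter> {x. (\<Sum>i=1..q. fst x i * snd x i) = \<theta>}"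
    by (auto simp: Kset_def coll_prob_def)
  then show ?thesis using compact_Times[OF compact_Dset compact_Dset] c2
    by (simp add: compact_Int_closed)
qed

lemma Dset_nonneg: "p \<in> Dset q \<Longrightarrow> i \<in> {1..q} \<Longrightarrow> 0 \<le> p i"
  by (auto simp: Dset_def distr_def)

lemma cont_JE: "continuous_on (Dset q \<times> Dset q) (JE q)"
proof -
  have f: "continuous_on (Dset q \<times> Dset q) (\<lambda>x. xlogx q (fst x i))" if "i \<in> {1..q}" for i
    by (rule continuous_on_compose2[OF xlogx_cont cont_fst_i]) (use that Dset_nonneg in auto)
  have s: "continuous_on (Dset q \<times> Dset q) (\<lambda>x. xlogx q (snd x i))" if "i \<in> {1..q}" for i
    by (rule continuous_on_compose2[OF xlogx_cont cont_snd_i]) (use that Dset_nonneg in auto)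
  show ?thesis unfolding JE_def ent_def
    by (intro continuous_on_add continuous_on_minus continuous_on_sum f s) auto
qed

definition ext :: "nat \<Rightarrow> (nat \<Rightarrow> real) \<Rightarrow> nat \<Rightarrow> real" where
  "ext q p = (\<lambda>i. if i \<in> {1..q} then p i else 0)"

lemma ext_sum: "(\<Sum>i=1..q. f (ext q p i)) = (\<Sum>i=1..q. f (p i))"
  by (intro sum.cong) (auto simp: ext_def)

lemma ext_sum2: "(\<Sum>i=1..q. f (ext q p i) (ext q r i)) = (\<Sum>i=1..q. f (p i) (r i))"
  by (intro sum.cong) (auto simp: ext_def)

lemma ext_Dset: "distr q p \<Longrightarrow> ext q p \<in> Dset q"
  unfolding Dset_def distr_def using ext_sum[of "\<lambda>x. x" q p] by (auto simp: ext_def)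

lemma ext_ent: "ent q (ext q p) = ent q p"
  unfolding ent_def using ext_sum[of "xlogx q" q p] by simp

lemma ext_coll: "coll_prob q (ext q p) (ext q r) = coll_prob q p r"
  unfolding coll_prob_def using ext_sum2[of "\<lambda>x y. x * y" q p r] by simp

lemma ent_set_eq:
  assumes "q \<ge> 2"
  shows "ent_set q \<theta> = JE q ` Kset q \<theta>"
proof (intro equalityI subsetI)
  fix h assume "h \<in> ent_set q \<theta>"
  then obtain p r where h: "h = joint_entropy q p r" "distr q p" "distr q r" "coll_prob q p r = \<theta>"
    by (auto simp: ent_set_def)
  have "(ext q p, ext q r) \<in> Kset q \<theta>" using h ext_Dset ext_coll by (simp add: Kset_def)
  moreover have "JE q (ext q p, ext q r) = h"
    using h joint_ent by (simp add: JE_def ext_ent)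
  ultimately show "h \<in> JE q ` Kset q \<theta>" by force
next
  fix h assume "h \<in> JE q ` Kset q \<theta>"
  then obtain x where x: "x \<in> Kset q \<theta>" "h = JE q x" by auto
  then have "distr q (fst x)" "distr q (snd x)" "coll_prob q (fst x) (snd x) = \<theta>"
    by (auto simp: Kset_def Dset_def)
  moreover have "h = joint_entropy q (fst x) (snd x)" using x calculation joint_ent by (simp add: JE_def)
  ultimately show "h \<in> ent_set q \<theta>" unfolding ent_set_def by blast
qed

lemma Kset_nonempty:
  assumes "q \<ge> 2" "0 \<le> \<theta>" "\<theta> \<le> 1"
  shows "Kset q \<theta> \<noteq> {}"
proof -
  define p0 :: "nat \<Rightarrow> real" where "p0 = (\<lambda>i. if i = 1 then 1 else 0)"
  define r0 :: "nat \<Rightarrow> real" where "r0 = (\<lambda>i. (if i = 1 then \<theta> else 0) + (if i = 2 then 1 - \<theta> else 0))"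
  have in1: "1 \<in> {1..q}" "2 \<in> {1..q}" using assms by auto
  have "(\<Sum>i=1..q. p0 i) = 1" unfolding p0_def using assms by simp
  then have "p0 \<in> Dset q" unfolding Dset_def distr_def p0_def using assms by auto
  moreover have "(\<Sum>i=1..q. r0 i) = 1" unfolding r0_def using assms by (simp add: sum.distrib)
  then have "r0 \<in> Dset q" unfolding Dset_def distr_def r0_def using assms by auto
  moreover have "coll_prob q p0 r0 = \<theta>"
  proof -
    have "coll_prob q p0 r0 = (\<Sum>i=1..q. if i = 1 then r0 1 else 0)"
      unfolding coll_prob_def p0_def by (intro sum.cong) auto
    also have "\<dots> = \<theta>" using in1 by (simp add: r0_def)
    finally show ?thesis .
  qed
  ultimately have "(p0, r0) \<in> Kset q \<theta>" by (simp add: Kset_def)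
  then show ?thesis by auto
qed

lemma F_max:
  assumes "q \<ge> 2" "0 \<le> \<theta>" "\<theta> \<le> 1"
  shows "\<exists>x\<in>Kset q \<theta>. F q \<theta> = JE q x \<and> (\<forall>y\<in>Kset q \<theta>. JE q y \<le> JE q x)"
proof -
  have sub: "Kset q \<theta> \<subseteq> Dset q \<times> Dset q" by (auto simp: Kset_def)
  obtain x where x: "x \<in> Kset q \<theta>" "\<forall>y\<in>Kset q \<theta>. JE q y \<le> JE q x"
    using continuous_attains_sup[OF compact_Kset Kset_nonempty[OF assms] continuous_on_subset[OF cont_JE sub]]
    by blast
  have "F q \<theta> = JE q x" unfolding F_def ent_set_eq[OF assms(1)]
    using x by (intro cSup_eq_maximum) auto
  then show ?thesis using x by blast
qed

lemma F_props:
  assumes "q \<ge> 2" "0 \<le> \<theta>" "\<theta> \<le> 1"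
  shows "F q \<theta> \<in> ent_set q \<theta>" "\<And>h. h \<in> ent_set q \<theta> \<Longrightarrow> h \<le> F q \<theta>"
  using F_max[OF assms] ent_set_eq[OF assms(1)] by force+

lemma F_ge:
  assumes "q \<ge> 2" "0 \<le> \<theta>" "\<theta> \<le> 1" "distr q p" "distr q r" "coll_prob q p r = \<theta>"
  shows "ent q p + ent q r \<le> F q \<theta>"
proof -
  have "joint_entropy q p r \<in> ent_set q \<theta>" using assms unfolding ent_set_def by blast
  then show ?thesis using F_props(2)[OF assms(1,2,3)] joint_ent[OF assms(4,5)] by simp
qed

lemma F_attained:
  assumes "q \<ge> 2" "0 \<le> \<theta>" "\<theta> \<le> 1"
  obtains p r where "distr q p" "distr q r" "coll_prob q p r = \<theta>" "F q \<theta> = ent q p + ent q r"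
proof -
  obtain x where "x \<in> Kset q \<theta>" "F q \<theta> = JE q x" using F_max[OF assms] by blast
  then show ?thesis using that by (auto simp: Kset_def Dset_def JE_def)
qed

lemma F_le2:
  assumes "q \<ge> 2" "0 \<le> \<theta>" "\<theta> \<le> 1"
  shows "F q \<theta> \<le> 2"
proof -
  obtain p r where "distr q p" "distr q r" "F q \<theta> = ent q p + ent q r" using F_attained[OF assms] by metis
  moreover have "ent q p \<le> 1" "ent q r \<le> 1" using calculation ent_le_1 assms(1) by auto
  ultimately show ?thesis by linarith
qed

lemma F_formula:
  assumes "q \<ge> 2" "1 / real q \<le> \<theta>" "\<theta> \<le> 1"
  shows "F q \<theta> = 2 * hh q (alpha q \<theta>)"
proof -
  have t0: "0 \<le> \<theta>" using assms(2) by (smt (verit) divide_nonneg_nonneg of_nat_0_le_iff)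
  obtain p r where pr: "distr q p" "distr q r" "coll_prob q p r = \<theta>" "F q \<theta> = ent q p + ent q r"
    using F_attained[OF assms(1) t0 assms(3)] by metis
  have "F q \<theta> \<le> 2 * hh q (alpha q \<theta>)" using upper[OF assms(1) pr(1,2,3) assms(2,3)] pr(4) by simp
  moreover
  define v where "v = (\<lambda>i::nat. if i = 1 then alpha q \<theta> else (1 - alpha q \<theta>) / (real q - 1))"
  have "ent q v + ent q v \<le> F q \<theta>"
    using F_ge[OF assms(1) t0 assms(3)] achieve[OF assms] unfolding v_def by blast
  then have "2 * hh q (alpha q \<theta>) \<le> F q \<theta>" using achieve(3)[OF assms] unfolding v_def by simp
  ultimately show ?thesis by simp
qed


lemma F_usc:
  assumes "q \<ge> 2" "0 \<le> \<theta>0" "\<theta>0 \<le> 1" "\<epsilon> > 0"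
  shows "\<exists>\<delta>>0. \<forall>\<theta>\<in>{0..1}. \<bar>\<theta> - \<theta>0\<bar> < \<delta> \<longrightarrow> F q \<theta> < F q \<theta>0 + \<epsilon>"
proof -
  define P where "P = Dset q \<times> Dset q"
  define S where "S = P \<inter> JE q -` {F q \<theta>0 + \<epsilon>..}"
  have cP: "compact P" unfolding P_def by (intro compact_Times compact_Dset)
  have "closed S" unfolding S_def P_def
    using continuous_closed_preimage[OF cont_JE compact_imp_closed[OF compact_Times[OF compact_Dset compact_Dset]] closed_atLeast] .
  then have cS: "compact S" using compact_Int_closed[OF cP, of S] by (simp add: S_def Int_absorb1 Int_assoc)
  define c where "c = (\<lambda>x::(nat\<Rightarrow>real)\<times>(nat\<Rightarrow>real). \<bar>(\<Sum>i=1..q. fst x i * snd x i) - \<theta>0\<bar>)"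
  have cc: "continuous_on S c" unfolding c_def
    by (intro continuous_on_rabs continuous_on_diff continuous_on_const continuous_on_sum continuous_on_mult cont_fst_i cont_snd_i)
  have KP: "x \<in> P" "coll_prob q (fst x) (snd x) = \<theta>" if "x \<in> Kset q \<theta>" for x \<theta>
    using that by (auto simp: Kset_def P_def mem_Times_iff)
  show ?thesis
  proof (cases "S = {}")
    case True
    show ?thesis
    proof (intro exI[of _ 1] conjI ballI impI)
      fix \<theta> :: real assume t: "\<theta> \<in> {0..1}"
      then obtain x where x: "x \<in> Kset q \<theta>" "F q \<theta> = JE q x" using F_max[OF assms(1)] by force
      have "x \<notin> S" using True by simp
      then show "F q \<theta> < F q \<theta>0 + \<epsilon>" using KP[OF x(1)] x(2) by (auto simp: S_def)
    qed simp
  next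
    case False
    obtain x0 where x0: "x0 \<in> S" "\<forall>y\<in>S. c x0 \<le> c y"
      using continuous_attains_inf[OF cS False cc] by blast
    have "c x0 > 0"
    proof (rule ccontr)
      assume "\<not> c x0 > 0"
      then have "c x0 = 0" by (simp add: c_def)
      then have "coll_prob q (fst x0) (snd x0) = \<theta>0" by (simp add: c_def coll_prob_def)
      then have "x0 \<in> Kset q \<theta>0" using x0(1) by (auto simp: S_def P_def Kset_def)
      then have "JE q x0 \<le> F q \<theta>0" using F_max[OF assms(1,2,3)] by force
      moreover have "JE q x0 \<ge> F q \<theta>0 + \<epsilon>" using x0(1) by (simp add: S_def)
      ultimately show False using assms(4) by simp
    qed
    show ?thesis
    proof (intro exI[of _ "c x0"] conjI ballI impI)
      fix \<theta> :: real assume t: "\<theta> \<in> {0..1}" "\<bar>\<theta> - \<theta>0\<bar> < c x0"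
      then obtain x where x: "x \<in> Kset q \<theta>" "F q \<theta> = JE q x" using F_max[OF assms(1)] by force
      show "F q \<theta> < F q \<theta>0 + \<epsilon>"
      proof (rule ccontr)
        assume "\<not> F q \<theta> < F q \<theta>0 + \<epsilon>"
        then have "x \<in> S" using KP[OF x(1)] x(2) by (auto simp: S_def)
        then have "c x0 \<le> c x" using x0 by blast
        moreover have "c x = \<bar>\<theta> - \<theta>0\<bar>" using KP[OF x(1)] by (simp add: c_def coll_prob_def)
        ultimately show False using t by simp
      qed
    qed (use \<open>c x0 > 0\<close> in simp)
  qed
qed

lemma distr_mix:
  assumes "distr q p" "distr q u" "0 \<le> t" "t \<le> 1"
  shows "distr q (\<lambda>i. (1 - t) * p i + t * u i)"
proof -
  have "(\<Sum>i=1..q. (1 - t) * p i + t * u i) = (1 - t) * (\<Sum>i=1..q. p i) + t * (\<Sum>i=1..q. u i)"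
    by (simp add: sum.distrib sum_distrib_left)
  then show ?thesis using assms by (auto simp: distr_def)
qed

lemma distr_unif: "q \<ge> 2 \<Longrightarrow> distr q (\<lambda>i. 1 / real q)"
  by (simp add: distr_def)

lemma ent_unif:
  assumes "q \<ge> 2" shows "ent q (\<lambda>i. 1 / real q) = 1"
proof -
  have L: "ln (real q) > 0" using assms by simp
  have "ent q (\<lambda>i. 1 / real q) = - (real q * (1 / real q * ln (1 / real q))) / ln (real q)"
    unfolding ent_eq by simp
  also have "\<dots> = 1" using assms L by (simp add: ln_div)
  finally show ?thesis .
qed

lemma distr_delta: "a \<in> {1..q} \<Longrightarrow> distr q (\<lambda>i. if i = a then 1 else 0)"
  by (simp add: distr_def)

lemma F_mono:
  assumes "q \<ge> 2" "0 \<le> \<theta>1" "\<theta>1 \<le> \<theta>2" "\<theta>2 \<le> 1 / real q"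
  shows "F q \<theta>1 \<le> F q \<theta>2"
proof (cases "\<theta>1 = \<theta>2")
  case True then show ?thesis by simp
next
  case False
  then have lt: "\<theta>1 < 1 / real q" using assms by simp
  have q0: "real q > 0" using assms by simp
  have qq: "1 / real q \<le> 1" using assms by simp
  obtain p r where pr: "distr q p" "distr q r" "coll_prob q p r = \<theta>1" "F q \<theta>1 = ent q p + ent q r"
    using F_attained[OF assms(1,2)] lt qq by (metis order.trans less_imp_le)
  define s where "s = sqrt ((1 / real q - \<theta>2) / (1 / real q - \<theta>1))"
  define t where "t = 1 - s"
  have rat: "0 \<le> (1 / real q - \<theta>2) / (1 / real q - \<theta>1)" "(1 / real q - \<theta>2) / (1 / real q - \<theta>1) \<le> 1"
    using assms lt by auto
  have s0: "0 \<le> s" "s \<le> 1" using rat by (auto simp: s_def)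
  have s2: "s^2 = (1 / real q - \<theta>2) / (1 / real q - \<theta>1)" using rat by (simp add: s_def)
  have t0: "0 \<le> t" "t \<le> 1" using s0 by (auto simp: t_def)
  define u where "u = (\<lambda>i::nat. 1 / real q)"
  define p' where "p' = (\<lambda>i. (1 - t) * p i + t * u i)"
  define r' where "r' = (\<lambda>i. (1 - t) * r i + t * u i)"
  have du: "distr q u" unfolding u_def using distr_unif[OF assms(1)] .
  have dp: "distr q p'" unfolding p'_def by (rule distr_mix[OF pr(1) du t0])
  have dr: "distr q r'" unfolding r'_def by (rule distr_mix[OF pr(2) du t0])
  have pn: "\<forall>i\<in>{1..q}. 0 \<le> p i" "\<forall>i\<in>{1..q}. 0 \<le> r i" "\<forall>i\<in>{1..q}. 0 \<le> u i"
    using pr du by (auto simp: distr_def)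
  have eu: "ent q u = 1" unfolding u_def by (rule ent_unif[OF assms(1)])
  have "ent q p' \<ge> (1 - t) * ent q p + t * ent q u"
    unfolding p'_def by (rule ent_concave) (use pn t0 assms in auto)
  moreover have "ent q p \<le> 1" by (rule ent_le_1[OF pr(1) assms(1)])
  moreover have "t * (1 - ent q p) \<ge> 0" using t0 calculation(2) by simp
  moreover have "(1 - t) * ent q p + t * ent q u = ent q p + t * (1 - ent q p)" using eu by (simp add: algebra_simps)
  ultimately have ep: "ent q p' \<ge> ent q p" by linarith
  have "ent q r' \<ge> (1 - t) * ent q r + t * ent q u"
    unfolding r'_def by (rule ent_concave) (use pn t0 assms in auto)
  moreover have "ent q r \<le> 1" by (rule ent_le_1[OF pr(2) assms(1)])
  moreover have "t * (1 - ent q r) \<ge> 0" using t0 calculation(2) by simp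
  moreover have "(1 - t) * ent q r + t * ent q u = ent q r + t * (1 - ent q r)" using eu by (simp add: algebra_simps)
  ultimately have er: "ent q r' \<ge> ent q r" by linarith
  have "coll_prob q p' r' = (\<Sum>i=1..q. (1-t)^2 * (p i * r i) + (1-t) * (t / real q) * p i + (1-t) * (t / real q) * r i + (t / real q)^2)"
    unfolding coll_prob_def p'_def r'_def u_def using q0 by (intro sum.cong) (auto simp: field_simps power2_eq_square)
  also have "\<dots> = (1-t)^2 * (\<Sum>i=1..q. p i * r i) + (1-t) * (t / real q) * (\<Sum>i=1..q. p i) + (1-t) * (t / real q) * (\<Sum>i=1..q. r i) + real q * (t / real q)^2"
    by (simp add: sum.distrib sum_distrib_left)
  also have "\<dots> = s^2 * \<theta>1 + (1 - s^2) / real q"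
    using pr q0 unfolding t_def by (simp add: distr_def coll_prob_def power2_eq_square field_simps)
  also have "\<dots> = 1 / real q - s^2 * (1 / real q - \<theta>1)"
    by (simp add: algebra_simps diff_divide_distrib)
  also have "s^2 * (1 / real q - \<theta>1) = 1 / real q - \<theta>2"
    unfolding s2 using lt by simp
  also have "1 / real q - (1 / real q - \<theta>2) = \<theta>2" by simp
  finally have cpr: "coll_prob q p' r' = \<theta>2" .
  have "ent q p' + ent q r' \<le> F q \<theta>2"
    using F_ge[OF assms(1) _ _ dp dr cpr] assms lt qq by simp
  then show ?thesis using ep er pr(4) by simp
qed


lemma F_left_one:
  assumes "q \<ge> 2" "0 < \<theta>0" "\<theta>0 \<le> 1" "\<epsilon> > 0"
    "distr q p" "distr q r" "coll_prob q p r = \<theta>0" "F q \<theta>0 = ent q p + ent q r"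
    "a \<in> {1..q}" "r a < \<theta>0"
  shows "\<exists>\<theta>1. 0 \<le> \<theta>1 \<and> \<theta>1 < \<theta>0 \<and> F q \<theta>0 - \<epsilon> < F q \<theta>1"
proof -
  define t where "t = min (1/2) (\<epsilon>/4)"
  have t: "0 < t" "t \<le> 1/2" "t < \<epsilon>/2" using assms(4) by (auto simp: t_def)
  define d where "d = (\<lambda>i::nat. if i = a then 1 else (0::real))"
  define p' where "p' = (\<lambda>i. (1-t) * p i + t * d i)"
  have dd: "distr q d" unfolding d_def by (rule distr_delta[OF assms(9)])
  have dp: "distr q p'" unfolding p'_def by (rule distr_mix[OF assms(5) dd]) (use t in auto)
  have ra0: "0 \<le> r a" using assms(6,9) by (auto simp: distr_def)
  have "coll_prob q p' r = (\<Sum>i=1..q. (1-t) * (p i * r i) + t * (d i * r i))"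
    unfolding coll_prob_def p'_def by (intro sum.cong) (auto simp: algebra_simps)
  also have "\<dots> = (1-t) * (\<Sum>i=1..q. p i * r i) + t * (\<Sum>i=1..q. d i * r i)"
    by (simp add: sum.distrib sum_distrib_left)
  also have "(\<Sum>i=1..q. d i * r i) = (\<Sum>i=1..q. if i = a then r i else 0)"
    by (intro sum.cong) (auto simp: d_def)
  also have "\<dots> = r a" using assms(9) by simp
  finally have c: "coll_prob q p' r = (1-t) * \<theta>0 + t * r a" using assms(7) by (simp add: coll_prob_def)
  define \<theta>1 where "\<theta>1 = (1-t) * \<theta>0 + t * r a"
  have "\<theta>0 - \<theta>1 = t * (\<theta>0 - r a)" by (simp add: \<theta>1_def algebra_simps)
  moreover have "t * (\<theta>0 - r a) > 0" using t assms(10) by simp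
  ultimately have lt: "\<theta>1 < \<theta>0" by simp
  have ge: "0 \<le> \<theta>1" unfolding \<theta>1_def using t ra0 assms(2) by simp
  have pn: "\<forall>i\<in>{1..q}. 0 \<le> p i" "\<forall>i\<in>{1..q}. 0 \<le> d i"
    using assms(5) dd by (auto simp: distr_def)
  have "ent q p' \<ge> (1-t) * ent q p + t * ent q d"
    unfolding p'_def by (rule ent_concave) (use pn t assms(1) in auto)
  moreover have "t * ent q d \<ge> 0" using ent_ge_0[OF dd assms(1)] t by simp
  ultimately have e1: "ent q p' \<ge> (1-t) * ent q p" by linarith
  have F1: "ent q p' + ent q r \<le> F q \<theta>1"
    using F_ge[OF assms(1) ge _ dp assms(6)] c lt assms(3) unfolding \<theta>1_def by simp
  have er: "t * ent q r \<ge> 0" using ent_ge_0[OF assms(6,1)] t by simp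
  have F2: "F q \<theta>0 \<le> 2" using assms(8) ent_le_1[OF assms(5,1)] ent_le_1[OF assms(6,1)] by simp
  have "F q \<theta>0 - \<epsilon> < F q \<theta>0 - 2 * t" using t by simp
  also have "\<dots> \<le> (1 - t) * F q \<theta>0" using F2 t by (simp add: algebra_simps)
  also have "\<dots> = (1-t) * ent q p + ent q r - t * ent q r" using assms(8) by (simp add: algebra_simps)
  also have "\<dots> \<le> F q \<theta>1" using F1 e1 er by linarith
  finally show ?thesis using ge lt by blast
qed

lemma F_left:
  assumes "q \<ge> 2" "0 < \<theta>0" "\<theta>0 \<le> 1 / real q" "\<epsilon> > 0"
  shows "\<exists>\<theta>1. 0 \<le> \<theta>1 \<and> \<theta>1 < \<theta>0 \<and> F q \<theta>0 - \<epsilon> < F q \<theta>1"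
proof -
  have qq: "1 / real q \<le> 1" using assms by simp
  have q0: "real q > 0" using assms by simp
  show ?thesis
  proof (cases "\<theta>0 = 1 / real q")
    case True
    define t where "t = min (1/2) (\<epsilon>/4)"
    have t: "0 < t" "t \<le> 1/2" "t < \<epsilon>/2" using assms(4) by (auto simp: t_def)
    define u where "u = (\<lambda>i::nat. 1 / real q)"
    define d1 where "d1 = (\<lambda>i::nat. if i = 1 then 1 else (0::real))"
    define d2 where "d2 = (\<lambda>i::nat. if i = 2 then 1 else (0::real))"
    have in12: "1 \<in> {1..q}" "2 \<in> {1..q}" using assms by auto
    have du: "distr q u" unfolding u_def using distr_unif[OF assms(1)] .
    have dd1: "distr q d1" unfolding d1_def by (rule distr_delta[OF in12(1)])
    have dd2: "distr q d2" unfolding d2_def by (rule distr_delta[OF in12(2)])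
    define p' where "p' = (\<lambda>i. (1-t) * u i + t * d1 i)"
    define r' where "r' = (\<lambda>i. (1-t) * u i + t * d2 i)"
    have dp: "distr q p'" unfolding p'_def by (rule distr_mix[OF du dd1]) (use t in auto)
    have dr: "distr q r'" unfolding r'_def by (rule distr_mix[OF du dd2]) (use t in auto)
    have "coll_prob q p' r' = (\<Sum>i=1..q. (1-t)^2 / (real q)^2 + ((1-t) * t / real q) * d2 i + ((1-t) * t / real q) * d1 i + t^2 * (d1 i * d2 i))"
      unfolding coll_prob_def p'_def r'_def u_def using q0
      by (intro sum.cong) (auto simp: field_simps power2_eq_square)
    also have "\<dots> = real q * ((1-t)^2 / (real q)^2) + ((1-t) * t / real q) * (\<Sum>i=1..q. d2 i) + ((1-t) * t / real q) * (\<Sum>i=1..q. d1 i) + t^2 * (\<Sum>i=1..q. d1 i * d2 i)"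
      by (simp add: sum.distrib sum_distrib_left)
    also have "(\<Sum>i=1..q. d1 i * d2 i) = 0" by (intro sum.neutral) (auto simp: d1_def d2_def)
    also have "(\<Sum>i=1..q. d1 i) = 1" using dd1 by (simp add: distr_def)
    also have "(\<Sum>i=1..q. d2 i) = 1" using dd2 by (simp add: distr_def)
    also have "real q * ((1-t)^2 / (real q)^2) + ((1-t) * t / real q) * 1 + ((1-t) * t / real q) * 1 + t^2 * 0
        = (1 - t^2) / real q" using q0 by (simp add: field_simps power2_eq_square)
    finally have c: "coll_prob q p' r' = (1 - t^2) / real q" .
    define \<theta>1 where "\<theta>1 = (1 - t^2) / real q"
    have "t * t \<le> (1/2) * (1/2)" using t by (intro mult_mono) auto
    then have t2: "0 < t^2" "t^2 < 1" using t by (auto simp: power2_eq_square)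
    have lt: "\<theta>1 < \<theta>0" unfolding \<theta>1_def True using t2 q0 by (simp add: divide_strict_right_mono)
    have ge: "0 \<le> \<theta>1" unfolding \<theta>1_def using t2 q0 by simp
    have pn: "\<forall>i\<in>{1..q}. 0 \<le> u i" "\<forall>i\<in>{1..q}. 0 \<le> d1 i" "\<forall>i\<in>{1..q}. 0 \<le> d2 i"
      using du dd1 dd2 by (auto simp: distr_def)
    have eu: "ent q u = 1" unfolding u_def by (rule ent_unif[OF assms(1)])
    have "ent q p' \<ge> (1-t) * ent q u + t * ent q d1"
      unfolding p'_def by (rule ent_concave) (use pn t assms(1) in auto)
    moreover have "t * ent q d1 \<ge> 0" using ent_ge_0[OF dd1 assms(1)] t by simp
    ultimately have e1: "ent q p' \<ge> 1 - t" using eu by simp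
    have "ent q r' \<ge> (1-t) * ent q u + t * ent q d2"
      unfolding r'_def by (rule ent_concave) (use pn t assms(1) in auto)
    moreover have "t * ent q d2 \<ge> 0" using ent_ge_0[OF dd2 assms(1)] t by simp
    ultimately have e2: "ent q r' \<ge> 1 - t" using eu by simp
    have F1: "ent q p' + ent q r' \<le> F q \<theta>1"
      using F_ge[OF assms(1) ge _ dp dr] c lt assms(3) qq unfolding \<theta>1_def by simp
    have F2: "F q \<theta>0 \<le> 2" using F_le2[OF assms(1), of \<theta>0] assms(2,3) qq by linarith
    have "F q \<theta>0 - \<epsilon> < F q \<theta>1" using F1 F2 e1 e2 t by linarith
    then show ?thesis using ge lt by blast
  next
    case False
    then have lt: "\<theta>0 < 1 / real q" using assms by simp
    have t1: "\<theta>0 \<le> 1" using assms(3) qq by linarith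
    obtain p r where pr: "distr q p" "distr q r" "coll_prob q p r = \<theta>0" "F q \<theta>0 = ent q p + ent q r"
      using F_attained[OF assms(1) _ t1] assms(2) by (metis less_imp_le)
    show ?thesis
    proof (cases "\<exists>a\<in>{1..q}. r a < \<theta>0")
      case True
      then obtain a where "a \<in> {1..q}" "r a < \<theta>0" by blast
      then show ?thesis using F_left_one[OF assms(1,2) t1 assms(4) pr] by blast
    next
      case nr: False
      show ?thesis
      proof (cases "\<exists>b\<in>{1..q}. p b < \<theta>0")
        case True
        then obtain b where "b \<in> {1..q}" "p b < \<theta>0" by blast
        moreover have "coll_prob q r p = \<theta>0" using pr(3) by (simp add: coll_prob_def mult.commute)
        moreover have "F q \<theta>0 = ent q r + ent q p" using pr(4) by simp
        ultimately show ?thesis using F_left_one[OF assms(1,2) t1 assms(4) pr(2) pr(1)] by blast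
      next
        case np: False
        have rr: "\<forall>i\<in>{1..q}. \<theta>0 \<le> r i" using nr by (auto simp: not_less)
        have pp: "\<forall>i\<in>{1..q}. \<theta>0 \<le> p i" using np by (auto simp: not_less)
        have "(\<Sum>i=1..q. p i * (r i - \<theta>0)) = (\<Sum>i=1..q. p i * r i) - \<theta>0 * (\<Sum>i=1..q. p i)"
          by (simp add: algebra_simps sum_subtractf sum_distrib_left)
        also have "\<dots> = 0" using pr(1,3) by (simp add: distr_def coll_prob_def)
        finally have s0: "(\<Sum>i=1..q. p i * (r i - \<theta>0)) = 0" .
        have "\<forall>i\<in>{1..q}. 0 \<le> p i * (r i - \<theta>0)" using rr pp assms(2) by auto
        then have z: "\<forall>i\<in>{1..q}. p i * (r i - \<theta>0) = 0"
          using s0 sum_nonneg_eq_0_iff[of "{1..q}" "\<lambda>i. p i * (r i - \<theta>0)"] by simp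
        have req: "\<forall>i\<in>{1..q}. r i = \<theta>0"
        proof
          fix i assume i: "i \<in> {1..q}"
          then have "p i > 0" using pp assms(2) by (meson less_le_trans)
          moreover have "p i * (r i - \<theta>0) = 0" using z i by blast
          ultimately show "r i = \<theta>0" by simp
        qed
        have "(\<Sum>i=1..q. r i) = real q * \<theta>0" using req by simp
        then have "real q * \<theta>0 = 1" using pr(2) by (simp add: distr_def)
        then have "\<theta>0 = 1 / real q" using q0 by (simp add: field_simps)
        then show ?thesis using lt by simp
      qed
    qed
  qed
qed

lemma F_cont_low:
  assumes "q \<ge> 2"
  shows "continuous_on {0..1 / real q} (F q)"
  unfolding continuous_on_iff
proof (intro ballI allI impI)
  fix \<theta>0 :: real and \<epsilon> :: real
  assume t0: "\<theta>0 \<in> {0..1 / real q}" and e: "0 < \<epsilon>"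
  have qq: "1 / real q \<le> 1" using assms by simp
  obtain \<delta>1 where d1: "\<delta>1 > 0" "\<forall>\<theta>\<in>{0..1}. \<bar>\<theta> - \<theta>0\<bar> < \<delta>1 \<longrightarrow> F q \<theta> < F q \<theta>0 + \<epsilon>"
    using F_usc[OF assms _ _ e, of \<theta>0] t0 qq by auto
  obtain \<delta>2 where d2: "\<delta>2 > 0" "\<forall>\<theta>\<in>{0..1 / real q}. \<theta>0 - \<delta>2 < \<theta> \<longrightarrow> \<theta> < \<theta>0 \<longrightarrow> F q \<theta>0 - \<epsilon> < F q \<theta>"
  proof (cases "\<theta>0 = 0")
    case True
    then show ?thesis using that[of 1] by auto
  next
    case False
    then have "0 < \<theta>0" using t0 by simp
    then obtain \<theta>1 where th: "0 \<le> \<theta>1" "\<theta>1 < \<theta>0" "F q \<theta>0 - \<epsilon> < F q \<theta>1"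
      using F_left[OF assms _ _ e] t0 by auto
    show ?thesis
    proof (rule that[of "\<theta>0 - \<theta>1"])
      show "\<theta>0 - \<theta>1 > 0" using th by simp
      show "\<forall>\<theta>\<in>{0..1 / real q}. \<theta>0 - (\<theta>0 - \<theta>1) < \<theta> \<longrightarrow> \<theta> < \<theta>0 \<longrightarrow> F q \<theta>0 - \<epsilon> < F q \<theta>"
      proof (intro ballI impI)
        fix \<theta> assume a: "\<theta> \<in> {0..1 / real q}" "\<theta>0 - (\<theta>0 - \<theta>1) < \<theta>" "\<theta> < \<theta>0"
        have "F q \<theta>1 \<le> F q \<theta>" using F_mono[OF assms th(1)] a by simp
        then show "F q \<theta>0 - \<epsilon> < F q \<theta>" using th by simp
      qed
    qed
  qed
  show "\<exists>d>0. \<forall>x'\<in>{0..1 / real q}. dist x' \<theta>0 < d \<longrightarrow> dist (F q x') (F q \<theta>0) < \<epsilon>"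
  proof (intro exI[of _ "min \<delta>1 \<delta>2"] conjI ballI impI)
    show "0 < min \<delta>1 \<delta>2" using d1 d2 by simp
    fix \<theta> assume a: "\<theta> \<in> {0..1 / real q}" "dist \<theta> \<theta>0 < min \<delta>1 \<delta>2"
    have up: "F q \<theta> < F q \<theta>0 + \<epsilon>" using d1(2) a qq by (auto simp: dist_real_def)
    have lo: "F q \<theta>0 - \<epsilon> < F q \<theta>"
    proof (cases "\<theta>0 \<le> \<theta>")
      case True
      then have "F q \<theta>0 \<le> F q \<theta>" using F_mono[OF assms] t0 a by simp
      then show ?thesis using e by simp
    next
      case False
      then show ?thesis using d2(2) a by (auto simp: dist_real_def)
    qed
    show "dist (F q \<theta>) (F q \<theta>0) < \<epsilon>" using up lo by (simp add: dist_real_def abs_less_iff)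
  qed
qed

lemma hh_cont: "continuous_on {0..1} (hh q)"
proof -
  have c1: "continuous_on {0..1} (\<lambda>a::real. a * ln a)"
    by (rule continuous_on_subset[OF xlnx_cont]) auto
  have c2: "continuous_on {0..1} (\<lambda>a::real. (1 - a) * ln (1 - a))"
    by (rule continuous_on_compose2[OF xlnx_cont, of "{0..1}" "\<lambda>a. 1 - a"]) (auto intro!: continuous_intros)
  have "continuous_on {0..1} (\<lambda>a::real. (- (a * ln a) - (1 - a) * ln (1 - a) + (1 - a) * ln (real q - 1)) * (1 / ln (real q)))"
    by (intro continuous_on_mult continuous_on_add continuous_on_diff continuous_on_minus c1 c2 continuous_on_const continuous_on_id)
  moreover have "hh q = (\<lambda>a::real. (- (a * ln a) - (1 - a) * ln (1 - a) + (1 - a) * ln (real q - 1)) * (1 / ln (real q)))"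
    by (simp add: hh_ln[abs_def])
  ultimately show ?thesis by simp
qed

lemma F_cont_high:
  assumes "q \<ge> 2"
  shows "continuous_on {1 / real q..1} (F q)"
proof -
  have ca: "continuous_on {1 / real q..1} (alpha q)" unfolding alpha_def
    by (intro continuous_intros)
  have "continuous_on {1 / real q..1} (\<lambda>\<theta>. 2 * hh q (alpha q \<theta>))"
  proof (intro continuous_on_mult continuous_on_const continuous_on_compose2[OF hh_cont ca])
    show "alpha q ` {1 / real q..1} \<subseteq> {0..1}"
    proof
      fix y assume "y \<in> alpha q ` {1 / real q..1}"
      then obtain \<theta> where "\<theta> \<in> {1 / real q..1}" "y = alpha q \<theta>" by auto
      then show "y \<in> {0..1}" using alpha_facts[OF assms, of \<theta>]
        by (auto intro: order_trans[rotated])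
    qed
  qed
  then show ?thesis
    by (rule continuous_on_cong[THEN iffD1, rotated 2]) (auto simp: F_formula[OF assms])
qed


lemma alpha_bij:
  assumes "q \<ge> 2"
  shows "bij_betw (alpha q) {1 / real q..1} {1 / real q..1}"
proof -
  have qq: "1 / real q < 1" using assms by simp
  have k: "1 - 1 / real q > 0" using qq by simp
  have inj: "inj_on (alpha q) {1 / real q..1}"
  proof (rule inj_onI)
    fix x y assume "x \<in> {1 / real q..1}" "y \<in> {1 / real q..1}" "alpha q x = alpha q y"
    then have "sqrt ((1 - 1 / real q) * (x - 1 / real q)) = sqrt ((1 - 1 / real q) * (y - 1 / real q))"
      by (simp add: alpha_def)
    then have "(1 - 1 / real q) * (x - 1 / real q) = (1 - 1 / real q) * (y - 1 / real q)" by simp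
    then show "x = y" using assms by simp
  qed
  have img: "alpha q ` {1 / real q..1} = {1 / real q..1}"
  proof
    show "alpha q ` {1 / real q..1} \<subseteq> {1 / real q..1}"
      using alpha_facts[OF assms] by auto
    show "{1 / real q..1} \<subseteq> alpha q ` {1 / real q..1}"
    proof
      fix y assume y: "y \<in> {1 / real q..1}"
      define \<theta> where "\<theta> = 1 / real q + (y - 1 / real q)^2 / (1 - 1 / real q)"
      have e: "(1 - 1 / real q) * (\<theta> - 1 / real q) = (y - 1 / real q)^2"
        unfolding \<theta>_def using k assms by simp
      have "alpha q \<theta> = 1 / real q + sqrt ((y - 1 / real q)^2)" unfolding alpha_def e ..
      also have "\<dots> = y" using y by simp
      finally have a: "alpha q \<theta> = y" .
      have "(y - 1 / real q)^2 \<le> (1 - 1 / real q)^2" using y by (intro power_mono) auto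
      then have "(y - 1 / real q)^2 / (1 - 1 / real q) \<le> (1 - 1 / real q)^2 / (1 - 1 / real q)"
        using k by (intro divide_right_mono) auto
      also have "\<dots> = 1 - 1 / real q" using k by (simp add: power2_eq_square)
      finally have "\<theta> \<le> 1" unfolding \<theta>_def by simp
      moreover have "1 / real q \<le> \<theta>" unfolding \<theta>_def using k by simp
      ultimately show "y \<in> alpha q ` {1 / real q..1}" using a by force
    qed
  qed
  show ?thesis using inj img by (simp add: bij_betw_def)
qed

theorem lemma2:
  fixes q :: nat
  assumes "q \<ge> 2"
  shows "(\<forall>\<theta>\<in>{0..1}. F q \<theta> \<in> ent_set q \<theta> \<and> (\<forall>h\<in>ent_set q \<theta>. h \<le> F q \<theta>))
       \<and> continuous_on {0..1} (F q)
       \<and> mono_on {0..1 / real q} (F q)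
       \<and> antimono_on {1 / real q..1} (F q)
       \<and> (\<forall>\<theta>\<in>{1 / real q..1}.
            F q \<theta> = 2 * (- alpha q \<theta> * log (real q) (alpha q \<theta>)
                          - (1 - alpha q \<theta>) * log (real q) (1 - alpha q \<theta>)
                          + (1 - alpha q \<theta>) * log (real q) (real q - 1)))
       \<and> bij_betw (alpha q) {1 / real q..1} {1 / real q..1}"
proof -
  have qq: "1 / real q \<le> 1" "0 \<le> 1 / real q" using assms by auto
  have P1: "\<forall>\<theta>\<in>{0..1}. F q \<theta> \<in> ent_set q \<theta> \<and> (\<forall>h\<in>ent_set q \<theta>. h \<le> F q \<theta>)"
    using F_props[OF assms] by auto
  have un: "{0..1::real} = {0..1 / real q} \<union> {1 / real q..1}" using ivl_disj_un_two_touch(4)[of 0 "1 / real q" 1] qq by simp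
  have P2: "continuous_on {0..1} (F q)"
    unfolding un by (rule continuous_on_closed_Un[OF closed_atLeastAtMost closed_atLeastAtMost F_cont_low[OF assms] F_cont_high[OF assms]])
  have P3: "mono_on {0..1 / real q} (F q)"
    by (rule mono_onI) (use F_mono[OF assms] in auto)
  have P4: "antimono_on {1 / real q..1} (F q)"
    unfolding monotone_on_def
  proof (intro ballI impI)
    fix x y :: real assume xy: "x \<in> {1 / real q..1}" "y \<in> {1 / real q..1}" "x \<le> y"
    have "hh q (alpha q y) \<le> hh q (alpha q x)"
      using hh_antimono[OF assms] alpha_facts[OF assms] alpha_mono[OF assms] xy by simp
    then show "F q y \<le> F q x" using F_formula[OF assms] xy by simp
  qed
  have P5: "\<forall>\<theta>\<in>{1 / real q..1}.
            F q \<theta> = 2 * (- alpha q \<theta> * log (real q) (alpha q \<theta>)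
                          - (1 - alpha q \<theta>) * log (real q) (1 - alpha q \<theta>)
                          + (1 - alpha q \<theta>) * log (real q) (real q - 1))"
    using F_formula[OF assms] unfolding hh_def by simp
  show ?thesis using P1 P2 P3 P4 P5 alpha_bij[OF assms] by blast
qed

end
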